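(* Let $\Gamma$ be any 2-agent zero-sum game in which all entries of $A=A^{(12)}$ are distinct. Then a probability measure $\pi$ on $\mathcal{X}$ is a stationary distribution of the Feller chain $\{X^t\}$ on $\mathcal{X}$ generated by Stochastic MWU if and only if $\pi$ is concentrated on pure strategy profiles (i.e., $\pi(x)>0$ only when $x$ is a pure strategy profile).
   Context: Two agents with finite pure strategy sets $\mathcal{S}_1,\mathcal{S}_2$, $\mathcal{S}=\mathcal{S}_1\times\mathcal{S}_2$, simplices $\mathcal{X}_i$ of mixed strategies, $\mathcal{X}=\mathcal{X}_1\times\mathcal{X}_2$; $A^{(12)}=A$, $A^{(21)}=-A^\top$. A pure strategy profile is $x=(e_{s_1},e_{s_2})$. The chain has kernel $P(x,\{z\})=\sum_{s\in\mathcal{S}:\,R(s,x)=z}\prod_i x_{is_i}$, where $R_{i\hat s}(s,x)=\dfrac{x_{i\hat s}\exp(\eta_i\langle e_{\hat s},A^{(ij)}e_{s_j}\rangle)}{\sum_{\bar s\in\mathcal{S}_i}x_{i\bar s}\exp(\eta_i\langle e_{\bar s},A^{(ij)}e_{s_j}\rangle)}$ ($j\ne i$, $0/0=0$) is the Stochastic MWU update after sampling pure profile $s$ from $x$. $\pi$ is stationary if $\int_{\mathcal{X}}\pi(dx)P(x,A')=\pi(A')$ for all Borel $A'\subseteq\mathcal{X}$. *)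

theory Defs
  imports "HOL-Analysis.Analysis" "HOL-Probability.Probability"
begin

text \<open>Pure strategies of agent 1: finite type 'n; of agent 2: finite type 'm.
  Mixed strategies are vectors in real^'n resp. real^'m.  The payoff matrix
  A = A^(12) has entry A$s1$s2; A^(21) = -A^T.\<close>

definition mixed_strategy :: "real^'k::finite \<Rightarrow> bool" where
  "mixed_strategy x \<longleftrightarrow> (\<forall>i. 0 \<le> x$i) \<and> (\<Sum>i\<in>UNIV. x$i) = 1"

definition profiles :: "((real^'n::finite) \<times> (real^'m::finite)) set" where
  "profiles = {x. mixed_strategy (fst x) \<and> mixed_strategy (snd x)}"

definition pure_profiles :: "((real^'n::finite) \<times> (real^'m::finite)) set" where
  "pure_profiles = {(axis s1 1, axis s2 1) | s1 s2. True}"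

text \<open>Multiplicative-weights update of a mixed strategy x with learning rate eta
  and payoff vector u (u s = payoff of pure strategy s); 0/0 = 0 by HOL division.\<close>
definition mwu_update :: "real \<Rightarrow> ('k::finite \<Rightarrow> real) \<Rightarrow> real^'k \<Rightarrow> real^'k" where
  "mwu_update eta u x =
     (\<chi> s. x$s * exp (eta * u s) / (\<Sum>t\<in>UNIV. x$t * exp (eta * u t)))"

definition smwu_step ::
  "real \<Rightarrow> real \<Rightarrow> real^'m::finite^'n::finite \<Rightarrow> 'n \<times> 'm
     \<Rightarrow> (real^'n) \<times> (real^'m) \<Rightarrow> (real^'n) \<times> (real^'m)" where
  "smwu_step eta1 eta2 A s x =
     (mwu_update eta1 (\<lambda>t. A$t$(snd s)) (fst x),
      mwu_update eta2 (\<lambda>t. - (A$(fst s)$t)) (snd x))"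

definition smwu_kernel ::
  "real \<Rightarrow> real \<Rightarrow> real^'m::finite^'n::finite
     \<Rightarrow> (real^'n) \<times> (real^'m) \<Rightarrow> ((real^'n) \<times> (real^'m)) set \<Rightarrow> real" where
  "smwu_kernel eta1 eta2 A x B =
     (\<Sum>s\<in>UNIV. (fst x)$(fst s) * (snd x)$(snd s) * indicator B (smwu_step eta1 eta2 A s x))"

definition smwu_stationary ::
  "real \<Rightarrow> real \<Rightarrow> real^'m::finite^'n::finite
     \<Rightarrow> ((real^'n) \<times> (real^'m)) measure \<Rightarrow> bool" where
  "smwu_stationary eta1 eta2 A \<pi> \<longleftrightarrow>
     (\<forall>B \<in> sets borel.
        (\<integral>\<^sup>+ x. ennreal (smwu_kernel eta1 eta2 A x B) \<partial>\<pi>) = emeasure \<pi> B)"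

end

theory Submission
  imports Defs
begin



lemma Z_pos:
  assumes "mixed_strategy (x::real^'k::finite)"
  shows "0 < (\<Sum>t\<in>UNIV. x$t * exp (e * u t))"
proof -
  have "\<exists>t. 0 < x$t"
  proof (rule ccontr)
    assume "\<not> ?thesis"
    then have "\<forall>t. x$t = 0" using assms unfolding mixed_strategy_def by (meson antisym not_le)
    then show False using assms unfolding mixed_strategy_def by simp
  qed
  then obtain t where "0 < x$t" by blast
  then show ?thesis
    by (intro sum_pos2[of UNIV t]) (use assms in \<open>auto simp: mixed_strategy_def\<close>)
qed

lemma mwu_comp:
  "mwu_update e u x $ s = x$s * exp (e * u s) / (\<Sum>t\<in>UNIV. x$t * exp (e * u t))"
  by (simp add: mwu_update_def)

lemma mwu_mixed:
  assumes "mixed_strategy (x::real^'k::finite)"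
  shows "mixed_strategy (mwu_update e u x)"
proof -
  have Z: "0 < (\<Sum>t\<in>UNIV. x$t * exp (e * u t))" by (rule Z_pos[OF assms])
  have "(\<Sum>s\<in>UNIV. mwu_update e u x $ s) = (\<Sum>s\<in>UNIV. x$s * exp (e * u s)) / (\<Sum>t\<in>UNIV. x$t * exp (e * u t))"
    by (simp add: mwu_comp sum_divide_distrib[symmetric])
  also have "\<dots> = 1" using Z by simp
  finally show ?thesis using assms Z unfolding mixed_strategy_def
    by (auto simp: mwu_comp)
qed

lemma mwu_pos_iff:
  assumes "mixed_strategy (x::real^'k::finite)"
  shows "(0 < mwu_update e u x $ s) = (0 < x$s)"
  using Z_pos[OF assms, of e u] by (simp add: mwu_comp zero_less_divide_iff zero_less_mult_iff)

lemma mwu_ln: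
  assumes "mixed_strategy (x::real^'k::finite)" "0 < x$s"
  shows "ln (mwu_update e u x $ s) = ln (x$s) + e * u s - ln (\<Sum>t\<in>UNIV. x$t * exp (e * u t))"
  using Z_pos[OF assms(1), of e u] assms(2) by (simp add: mwu_comp ln_div ln_mult)

lemma exp_gt_add_one_strict:
  fixes y :: real assumes "y \<noteq> 0" shows "1 + y < exp y"
proof (cases "1 + y/2 \<ge> 0")
  case True
  have "1 + y/2 \<le> exp (y/2)" by (rule exp_ge_add_one_self)
  then have "(1 + y/2)^2 \<le> (exp (y/2))^2" using True by (intro power_mono) auto
  also have "(exp (y/2))^2 = exp y" by (metis exp_add field_sum_of_halves power2_eq_square)
  also have "(1 + y/2)^2 = 1 + y + y^2/4" by (simp add: power2_eq_square field_simps)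
  finally have "1 + y + y^2/4 \<le> exp y" by (simp add: power2_eq_square field_simps)
  moreover have "0 < y^2" using assms by simp
  ultimately show ?thesis by linarith
next
  case False
  then have "1 + y < 0" by linarith
  then show ?thesis using exp_gt_zero[of y] by linarith
qed

lemma jensen_exp:
  fixes x a :: "'i \<Rightarrow> real"
  assumes "finite I" "\<forall>i\<in>I. 0 \<le> x i" "sum x I = 1"
  shows "(\<Sum>i\<in>I. x i * a i) \<le> ln (\<Sum>i\<in>I. x i * exp (a i))"
    and "(\<exists>i\<in>I. \<exists>k\<in>I. 0 < x i \<and> 0 < x k \<and> a i \<noteq> a k) \<Longrightarrow>
          (\<Sum>i\<in>I. x i * a i) < ln (\<Sum>i\<in>I. x i * exp (a i))"
proof -
  define m where "m = (\<Sum>i\<in>I. x i * a i)"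
  have eq: "(\<Sum>i\<in>I. x i * exp (a i)) = exp m * (\<Sum>i\<in>I. x i * exp (a i - m))"
    by (simp add: sum_distrib_left exp_diff algebra_simps)
  have base: "(\<Sum>i\<in>I. x i * (1 + (a i - m))) = 1"
  proof -
    have "(\<Sum>i\<in>I. x i * (1 + (a i - m))) = (\<Sum>i\<in>I. x i) + (\<Sum>i\<in>I. x i * a i) - m * (\<Sum>i\<in>I. x i)"
      by (simp add: distrib_left right_diff_distrib sum.distrib sum_subtractf sum_distrib_left mult.commute)
    then show ?thesis using assms(3) by (simp add: m_def)
  qed
  have le: "(\<Sum>i\<in>I. x i * (1 + (a i - m))) \<le> (\<Sum>i\<in>I. x i * exp (a i - m))"
    by (intro sum_mono mult_left_mono) (use assms in auto)
  show "(\<Sum>i\<in>I. x i * a i) \<le> ln (\<Sum>i\<in>I. x i * exp (a i))"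
  proof -
    have "1 \<le> (\<Sum>i\<in>I. x i * exp (a i - m))" using le base by simp
    then have "exp m \<le> (\<Sum>i\<in>I. x i * exp (a i))" unfolding eq by simp
    then show ?thesis unfolding m_def[symmetric]
    proof -
      assume h: "exp m \<le> (\<Sum>i\<in>I. x i * exp (a i))"
      then have pos: "0 < (\<Sum>i\<in>I. x i * exp (a i))" using exp_gt_zero[of m] by linarith
      have "exp m \<le> exp (ln (\<Sum>i\<in>I. x i * exp (a i)))" using h pos by simp
      then show "m \<le> ln (\<Sum>i\<in>I. x i * exp (a i))" by simp
    qed
  qed
  assume "\<exists>i\<in>I. \<exists>k\<in>I. 0 < x i \<and> 0 < x k \<and> a i \<noteq> a k"
  then obtain i k where ik: "i\<in>I" "k\<in>I" "0 < x i" "0 < x k" "a i \<noteq> a k" by blast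
  have "\<exists>j\<in>I. 0 < x j \<and> a j \<noteq> m"
  proof (cases "a i = m")
    case True then show ?thesis using ik by (intro bexI[of _ k]) auto
  next
    case False then show ?thesis using ik by (intro bexI[of _ i]) auto
  qed
  then obtain j where j: "j\<in>I" "0 < x j" "a j \<noteq> m" by blast
  have lt: "(\<Sum>i\<in>I. x i * (1 + (a i - m))) < (\<Sum>i\<in>I. x i * exp (a i - m))"
  proof (rule sum_strict_mono_ex1)
    show "finite I" by fact
    show "\<forall>i\<in>I. x i * (1 + (a i - m)) \<le> x i * exp (a i - m)"
      by (intro ballI mult_left_mono) (use assms in auto)
    show "\<exists>i\<in>I. x i * (1 + (a i - m)) < x i * exp (a i - m)"
      using j by (intro bexI[of _ j] mult_strict_left_mono) (auto intro!: exp_gt_add_one_strict)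
  qed
  have "1 < (\<Sum>i\<in>I. x i * exp (a i - m))" using lt base by simp
  then have "exp m < (\<Sum>i\<in>I. x i * exp (a i))" unfolding eq by simp
  then show "(\<Sum>i\<in>I. x i * a i) < ln (\<Sum>i\<in>I. x i * exp (a i))"
    unfolding m_def[symmetric]
  proof -
    assume h: "exp m < (\<Sum>i\<in>I. x i * exp (a i))"
    then have pos: "0 < (\<Sum>i\<in>I. x i * exp (a i))" using exp_gt_zero[of m] by linarith
    have "exp m < exp (ln (\<Sum>i\<in>I. x i * exp (a i)))" using h pos by simp
    then show "m < ln (\<Sum>i\<in>I. x i * exp (a i))" by simp
  qed
qed


lemma meas_vec:
  assumes "\<And>i. (\<lambda>x. f x i) \<in> borel_measurable M"
  shows "(\<lambda>x. (\<chi> i. f x i)::real^'n::finite) \<in> borel_measurable M"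
  by (subst borel_measurable_euclidean_space) (auto simp: Basis_vec_def inner_axis assms)

lemma meas_nth[measurable]: "(\<lambda>x::real^'n::finite. x$i) \<in> borel_measurable borel"
  by (intro borel_measurable_continuous_onI continuous_intros)

lemma meas_mwu[measurable]:
  "(\<lambda>x. mwu_update e u (x::real^'k::finite)) \<in> borel_measurable borel"
  unfolding mwu_update_def by (intro meas_vec) measurable

lemma meas_fst: "(fst :: ('a::topological_space \<times> 'b::topological_space) \<Rightarrow> 'a) \<in> borel_measurable borel"
  by (intro borel_measurable_continuous_onI continuous_intros)

lemma meas_snd: "(snd :: ('a::topological_space \<times> 'b::topological_space) \<Rightarrow> 'b) \<in> borel_measurable borel"
  by (intro borel_measurable_continuous_onI continuous_intros)

lemma meas_step[measurable]:
  "smwu_step eta1 eta2 A s \<in> borel_measurable borel"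
  unfolding smwu_step_def
  by (rule borel_measurable_Pair; rule measurable_compose[OF _ meas_mwu]) (rule meas_fst, rule meas_snd)

lemma meas_fst_nth[measurable]: "(\<lambda>x::(real^'n::finite)\<times>(real^'m::finite). fst x $ i) \<in> borel_measurable borel"
  by (intro borel_measurable_continuous_onI continuous_intros)

lemma meas_snd_nth[measurable]: "(\<lambda>x::(real^'n::finite)\<times>(real^'m::finite). snd x $ i) \<in> borel_measurable borel"
  by (intro borel_measurable_continuous_onI continuous_intros)

lemma stat_ext:
  fixes A :: "real^'m::finite^'n::finite"
  assumes stat: "smwu_stationary eta1 eta2 A \<pi>" and borel: "sets \<pi> = sets borel"
    and AEp: "AE x in \<pi>. x \<in> profiles"
    and f: "f \<in> borel_measurable borel"
  shows "(\<integral>\<^sup>+x. (\<Sum>s\<in>UNIV. ennreal (fst x $ fst s * snd x $ snd s) * f (smwu_step eta1 eta2 A s x)) \<partial>\<pi>)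
         = (\<integral>\<^sup>+x. f x \<partial>\<pi>)"
  using f
proof (induction rule: borel_measurable_induct)
  case (cong f g)
  then show ?case by simp
next
  case (set B)
  have w: "0 \<le> fst x $ fst s * snd x $ snd s" if "x \<in> profiles" for x s
    using that by (auto simp: profiles_def mixed_strategy_def)
  have "(\<integral>\<^sup>+x. (\<Sum>s\<in>UNIV. ennreal (fst x $ fst s * snd x $ snd s) * indicator B (smwu_step eta1 eta2 A s x)) \<partial>\<pi>)
       = (\<integral>\<^sup>+x. ennreal (smwu_kernel eta1 eta2 A x B) \<partial>\<pi>)"
  proof (rule nn_integral_cong_AE)
    show "AE x in \<pi>. (\<Sum>s\<in>UNIV. ennreal (fst x $ fst s * snd x $ snd s) * indicator B (smwu_step eta1 eta2 A s x)) =
          ennreal (smwu_kernel eta1 eta2 A x B)"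
      using AEp
    proof eventually_elim
      case (elim x)
      have "(\<Sum>s\<in>UNIV. ennreal (fst x $ fst s * snd x $ snd s) * indicator B (smwu_step eta1 eta2 A s x))
          = (\<Sum>s\<in>UNIV. ennreal (fst x $ fst s * snd x $ snd s * indicator B (smwu_step eta1 eta2 A s x)))"
        using w[OF elim] by (intro sum.cong refl) (simp add: ennreal_mult' ennreal_indicator)
      also have "\<dots> = ennreal (smwu_kernel eta1 eta2 A x B)"
        unfolding smwu_kernel_def using w[OF elim] by (intro sum_ennreal) auto
      finally show ?case .
    qed
  qed
  also have "\<dots> = emeasure \<pi> B" using stat set unfolding smwu_stationary_def by auto
  also have "\<dots> = (\<integral>\<^sup>+x. indicator B x \<partial>\<pi>)" using set borel by simp
  finally show ?case .
next
  case (mult u c)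
  have mu[measurable]: "u \<in> borel_measurable borel" by fact
  have "(\<integral>\<^sup>+x. (\<Sum>s\<in>UNIV. ennreal (fst x $ fst s * snd x $ snd s) * (c * u (smwu_step eta1 eta2 A s x))) \<partial>\<pi>)
      = (\<integral>\<^sup>+x. c * (\<Sum>s\<in>UNIV. ennreal (fst x $ fst s * snd x $ snd s) * u (smwu_step eta1 eta2 A s x)) \<partial>\<pi>)"
    by (simp add: sum_distrib_left mult.left_commute)
  also have "\<dots> = c * (\<integral>\<^sup>+x. (\<Sum>s\<in>UNIV. ennreal (fst x $ fst s * snd x $ snd s) * u (smwu_step eta1 eta2 A s x)) \<partial>\<pi>)"
    by (rule nn_integral_cmult) (simp add: measurable_cong_sets[OF borel refl])
  also have "\<dots> = c * (\<integral>\<^sup>+x. u x \<partial>\<pi>)" using mult by simp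
  also have "\<dots> = (\<integral>\<^sup>+x. c * u x \<partial>\<pi>)"
    by (rule nn_integral_cmult[symmetric]) (simp add: measurable_cong_sets[OF borel refl])
  finally show ?case .
next
  case (add u v)
  have mu[measurable]: "u \<in> borel_measurable borel" "v \<in> borel_measurable borel" by fact+
  have "(\<integral>\<^sup>+x. (\<Sum>s\<in>UNIV. ennreal (fst x $ fst s * snd x $ snd s) * (v (smwu_step eta1 eta2 A s x) + u (smwu_step eta1 eta2 A s x))) \<partial>\<pi>)
      = (\<integral>\<^sup>+x. (\<Sum>s\<in>UNIV. ennreal (fst x $ fst s * snd x $ snd s) * v (smwu_step eta1 eta2 A s x)) + (\<Sum>s\<in>UNIV. ennreal (fst x $ fst s * snd x $ snd s) * u (smwu_step eta1 eta2 A s x)) \<partial>\<pi>)"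
    by (simp add: distrib_left sum.distrib)
  also have "\<dots> = (\<integral>\<^sup>+x. (\<Sum>s\<in>UNIV. ennreal (fst x $ fst s * snd x $ snd s) * v (smwu_step eta1 eta2 A s x)) \<partial>\<pi>) + (\<integral>\<^sup>+x. (\<Sum>s\<in>UNIV. ennreal (fst x $ fst s * snd x $ snd s) * u (smwu_step eta1 eta2 A s x)) \<partial>\<pi>)"
    by (rule nn_integral_add) (simp_all add: measurable_cong_sets[OF borel refl])
  also have "\<dots> = (\<integral>\<^sup>+x. v x \<partial>\<pi>) + (\<integral>\<^sup>+x. u x \<partial>\<pi>)" using add by simp
  also have "\<dots> = (\<integral>\<^sup>+x. v x + u x \<partial>\<pi>)"
    by (rule nn_integral_add[symmetric]) (simp_all add: measurable_cong_sets[OF borel refl])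
  finally show ?case .
next
  case (seq U)
  have mU[measurable]: "\<And>i. U i \<in> borel_measurable borel" by fact
  have "(\<integral>\<^sup>+x. (\<Sum>s\<in>UNIV. ennreal (fst x $ fst s * snd x $ snd s) * (SUP i. U i) (smwu_step eta1 eta2 A s x)) \<partial>\<pi>)
      = (\<integral>\<^sup>+x. (SUP i. (\<Sum>s\<in>UNIV. ennreal (fst x $ fst s * snd x $ snd s) * U i (smwu_step eta1 eta2 A s x))) \<partial>\<pi>)"
  proof (rule nn_integral_cong)
    fix x
    show "(\<Sum>s\<in>UNIV. ennreal (fst x $ fst s * snd x $ snd s) * (SUP i. U i) (smwu_step eta1 eta2 A s x))
        = (SUP i. (\<Sum>s\<in>UNIV. ennreal (fst x $ fst s * snd x $ snd s) * U i (smwu_step eta1 eta2 A s x)))"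
      by (subst ennreal_SUP_sum)
        (auto simp: SUP_apply image_image SUP_mult_left_ennreal incseq_def le_funD[OF incseqD[OF \<open>incseq U\<close>]] intro!: mult_left_mono)
  qed
  also have "\<dots> = (SUP i. (\<integral>\<^sup>+x. (\<Sum>s\<in>UNIV. ennreal (fst x $ fst s * snd x $ snd s) * U i (smwu_step eta1 eta2 A s x)) \<partial>\<pi>))"
    by (rule nn_integral_monotone_convergence_SUP)
      (auto simp: measurable_cong_sets[OF borel refl] incseq_def le_fun_def
          le_funD[OF incseqD[OF \<open>incseq U\<close>]] intro!: sum_mono mult_left_mono)
  also have "\<dots> = (SUP i. (\<integral>\<^sup>+x. U i x \<partial>\<pi>))" using seq by simp
  also have "\<dots> = (\<integral>\<^sup>+x. (SUP i. U i x) \<partial>\<pi>)"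
    by (rule nn_integral_monotone_convergence_SUP[symmetric])
      (auto simp: measurable_cong_sets[OF borel refl] \<open>incseq U\<close>)
  also have "\<dots> = (\<integral>\<^sup>+x. (SUP i. U i) x \<partial>\<pi>)"
    by (simp add: SUP_apply image_image)
  finally show ?case .
qed


lemma fp_aux:
  fixes p c :: "'i::finite \<Rightarrow> real"
  assumes p0: "\<forall>i. 0 \<le> p i" and pS: "\<forall>i. i \<notin> S \<longrightarrow> p i = 0" and p1: "sum p UNIV = 1"
    and fx: "\<forall>i\<in>S. p i * T = max 0 (v - c i)" and val: "(\<Sum>i\<in>UNIV. p i * c i) = v"
  shows "\<forall>i\<in>S. v \<le> c i"
proof -
  have "\<exists>i\<in>S. 0 < p i \<and> v \<le> c i"
  proof (rule ccontr)
    assume H: "\<not> ?thesis"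
    have "\<exists>i. 0 < p i"
    proof (rule ccontr)
      assume "\<not> ?thesis"
      then have "\<forall>i. p i = 0" using p0 by (meson antisym not_le)
      then show False using p1 by simp
    qed
    then obtain i0 where i0: "0 < p i0" by blast
    have i0S: "i0 \<in> S" using i0 pS by force
    have "(\<Sum>i\<in>UNIV. p i * c i) < (\<Sum>i\<in>UNIV. p i * v)"
    proof (rule sum_strict_mono_ex1)
      show "\<forall>i\<in>UNIV. p i * c i \<le> p i * v"
      proof
        fix i :: 'i
        show "p i * c i \<le> p i * v"
        proof (cases "i \<in> S \<and> 0 < p i")
          case True then show ?thesis using H by (intro mult_left_mono) (auto simp: not_le)
        next
          case False then have "p i = 0" using p0 pS by (meson antisym not_le)
          then show ?thesis by simp
        qed
      qed
      show "\<exists>i\<in>UNIV. p i * c i < p i * v"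
        using H i0 i0S by (intro bexI[of _ i0] mult_strict_left_mono) (auto simp: not_le)
    qed simp
    also have "\<dots> = v" using p1 by (simp add: sum_distrib_right[symmetric])
    finally show False using val by simp
  qed
  then obtain i where i: "i \<in> S" "0 < p i" "v \<le> c i" by blast
  have "p i * T = 0" using fx i by auto
  then have T0: "T = 0" using i by simp
  show ?thesis
  proof
    fix k assume "k \<in> S"
    then have "max 0 (v - c k) = 0" using fx T0 by auto
    then show "v \<le> c k" by (simp add: max_def split: if_splits)
  qed
qed

definition simplexS :: "'i::finite set \<Rightarrow> (real^'i) set" where
  "simplexS S = {p. (\<forall>i. 0 \<le> p$i) \<and> (\<forall>i. i \<notin> S \<longrightarrow> p$i = 0) \<and> (\<Sum>i\<in>UNIV. p$i) = 1}"

lemma simplexS_nonempty: "S \<noteq> {} \<Longrightarrow> simplexS S \<noteq> {}"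
proof -
  assume "S \<noteq> {}"
  then obtain i0 where "i0 \<in> S" by blast
  then have "axis i0 1 \<in> simplexS S"
    by (auto simp: simplexS_def axis_def sum.delta)
  then show ?thesis by blast
qed

lemma simplexS_compact: "compact (simplexS S)"
unfolding compact_eq_bounded_closed
proof (intro conjI)
  show "bounded (simplexS S)"
  proof (rule boundedI)
    fix p :: "real^'a" assume "p \<in> simplexS S"
    then have "norm p \<le> (\<Sum>i\<in>UNIV. \<bar>p$i\<bar>)" "(\<Sum>i\<in>UNIV. \<bar>p$i\<bar>) = 1"
      using norm_le_l1_cart[of p] by (auto simp: simplexS_def)
    then show "norm p \<le> 1" by simp
  qed
  have "simplexS S = (\<Inter>i. {p. 0 \<le> p$i}) \<inter> (\<Inter>i\<in>-S. {p. p$i = 0}) \<inter> {p. (\<Sum>i\<in>UNIV. p$i) = 1}"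
    by (auto simp: simplexS_def)
  also have "closed \<dots>"
    by (intro closed_Int closed_INT ballI closed_Collect_le closed_Collect_eq continuous_intros)
  finally show "closed (simplexS S)" .
qed

lemma simplexS_convex: "convex (simplexS S)"
  unfolding convex_def simplexS_def
  by (auto simp: sum.distrib sum_distrib_left[symmetric])

lemma minimax_restricted:
  fixes A :: "real^'m::finite^'n::finite" and S1 :: "'n set" and S2 :: "'m set"
  assumes S1: "S1 \<noteq> {}" and S2: "S2 \<noteq> {}"
  shows "\<exists>p q w. p \<in> simplexS S1 \<and> q \<in> simplexS S2 \<and>
    (\<forall>j\<in>S2. (\<Sum>i\<in>UNIV. p$i * A$i$j) \<le> w) \<and> (\<forall>i\<in>S1. w \<le> (\<Sum>j\<in>UNIV. A$i$j * q$j))"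
proof -
  define val where "val = (\<lambda>(p::real^'n) (q::real^'m). \<Sum>i\<in>UNIV. p$i * (\<Sum>j\<in>UNIV. A$i$j * q$j))"
  define g where "g = (\<lambda>p q i. max 0 (val p q - (\<Sum>j\<in>UNIV. A$i$j * q$j)))"
  define h where "h = (\<lambda>p q j. max 0 ((\<Sum>i\<in>UNIV. p$i * A$i$j) - val p q))"
  define F where "F = (\<lambda>z::(real^'n) \<times> (real^'m).
     ((\<chi> i. if i \<in> S1 then (fst z $ i + g (fst z) (snd z) i) / (1 + (\<Sum>k\<in>S1. g (fst z) (snd z) k)) else 0),
      (\<chi> j. if j \<in> S2 then (snd z $ j + h (fst z) (snd z) j) / (1 + (\<Sum>l\<in>S2. h (fst z) (snd z) l)) else 0)))"
  have g0: "0 \<le> g p q i" for p q i by (simp add: g_def)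
  have h0: "0 \<le> h p q j" for p q j by (simp add: h_def)
  have d1: "0 < 1 + (\<Sum>k\<in>S1. g p q k)" for p q
    using sum_nonneg[of S1 "g p q"] g0 by (smt (verit))
  have d2: "0 < 1 + (\<Sum>k\<in>S2. h p q k)" for p q
    using sum_nonneg[of S2 "h p q"] h0 by (smt (verit))
  let ?K = "simplexS S1 \<times> simplexS S2"
  have "continuous_on UNIV F"
  proof -
    have c1: "continuous_on UNIV (\<lambda>z::(real^'n) \<times> (real^'m). if i \<in> S1 then (fst z $ i + g (fst z) (snd z) i) / (1 + (\<Sum>k\<in>S1. g (fst z) (snd z) k)) else 0)" for i
    proof (cases "i \<in> S1")
      case True
      show ?thesis using True d1 unfolding g_def val_def
        by simp (intro continuous_intros; auto simp: g_def[symmetric] val_def[symmetric] d1 less_imp_neq[symmetric])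
    qed simp
    have c2: "continuous_on UNIV (\<lambda>z::(real^'n) \<times> (real^'m). if j \<in> S2 then (snd z $ j + h (fst z) (snd z) j) / (1 + (\<Sum>l\<in>S2. h (fst z) (snd z) l)) else 0)" for j
    proof (cases "j \<in> S2")
      case True
      show ?thesis using True d2 unfolding h_def val_def
        by simp (intro continuous_intros; auto simp: h_def[symmetric] val_def[symmetric] d2 less_imp_neq[symmetric])
    qed simp
    show ?thesis unfolding F_def
      by (intro continuous_on_Pair continuous_on_vec_lambda c1 c2)
  qed
  moreover have "F \<in> ?K \<rightarrow> ?K"
  proof
    fix z assume "z \<in> ?K"
    show "F z \<in> ?K"
    proof -
      have a: "(\<Sum>i\<in>UNIV. (if i \<in> S1 then (fst z $ i + g (fst z) (snd z) i) / (1 + (\<Sum>k\<in>S1. g (fst z) (snd z) k)) else 0)) = 1"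
      proof -
        have "(\<Sum>i\<in>UNIV. (if i \<in> S1 then (fst z $ i + g (fst z) (snd z) i) / (1 + (\<Sum>k\<in>S1. g (fst z) (snd z) k)) else 0))
           = (\<Sum>i\<in>S1. (fst z $ i + g (fst z) (snd z) i)) / (1 + (\<Sum>k\<in>S1. g (fst z) (snd z) k))"
          by (simp add: sum.If_cases sum_divide_distrib)
        also have "(\<Sum>i\<in>S1. (fst z $ i + g (fst z) (snd z) i)) = 1 + (\<Sum>k\<in>S1. g (fst z) (snd z) k)"
        proof -
          have "(\<Sum>i\<in>S1. fst z $ i) = (\<Sum>i\<in>UNIV. fst z $ i)"
            using \<open>z \<in> ?K\<close> by (intro sum.mono_neutral_left) (auto simp: simplexS_def mem_Times_iff)
          then show ?thesis
            using \<open>z \<in> ?K\<close> by (simp add: sum.distrib simplexS_def mem_Times_iff)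
        qed
        finally show ?thesis using d1[of "fst z" "snd z"] by simp
      qed
      have b: "(\<Sum>j\<in>UNIV. (if j \<in> S2 then (snd z $ j + h (fst z) (snd z) j) / (1 + (\<Sum>l\<in>S2. h (fst z) (snd z) l)) else 0)) = 1"
      proof -
        have "(\<Sum>j\<in>UNIV. (if j \<in> S2 then (snd z $ j + h (fst z) (snd z) j) / (1 + (\<Sum>l\<in>S2. h (fst z) (snd z) l)) else 0))
           = (\<Sum>j\<in>S2. (snd z $ j + h (fst z) (snd z) j)) / (1 + (\<Sum>l\<in>S2. h (fst z) (snd z) l))"
          by (simp add: sum.If_cases sum_divide_distrib)
        also have "(\<Sum>j\<in>S2. (snd z $ j + h (fst z) (snd z) j)) = 1 + (\<Sum>l\<in>S2. h (fst z) (snd z) l)"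
        proof -
          have "(\<Sum>j\<in>S2. snd z $ j) = (\<Sum>j\<in>UNIV. snd z $ j)"
            using \<open>z \<in> ?K\<close> by (intro sum.mono_neutral_left) (auto simp: simplexS_def mem_Times_iff)
          then show ?thesis
            using \<open>z \<in> ?K\<close> by (simp add: sum.distrib simplexS_def mem_Times_iff)
        qed
        finally show ?thesis using d2[of "fst z" "snd z"] by simp
      qed
      show ?thesis
        using a b \<open>z \<in> ?K\<close> d1[of "fst z" "snd z"] d2[of "fst z" "snd z"] g0 h0
        by (auto simp: F_def simplexS_def mem_Times_iff intro!: divide_nonneg_pos add_nonneg_nonneg)
    qed
  qed
  moreover have "compact ?K" by (intro compact_Times simplexS_compact)
  moreover have "convex ?K" by (intro convex_Times simplexS_convex)
  moreover have "?K \<noteq> {}" using simplexS_nonempty[OF S1] simplexS_nonempty[OF S2] by simp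
  ultimately obtain z where z: "z \<in> ?K" "F z = z"
    using brouwer[of ?K F] continuous_on_subset[of UNIV F ?K] by blast
  obtain p q where pq: "z = (p, q)" by fastforce
  have pK: "p \<in> simplexS S1" and qK: "q \<in> simplexS S2" using z pq by auto
  define T1 where "T1 = (\<Sum>k\<in>S1. g p q k)"
  define T2 where "T2 = (\<Sum>l\<in>S2. h p q l)"
  have fix1: "\<forall>i\<in>S1. p$i * T1 = g p q i"
  proof
    fix i assume i: "i \<in> S1"
    have "(p$i + g p q i) / (1 + T1) = p$i"
    proof -
      have "fst (F (p, q)) $ i = p $ i" using z(2) pq by simp
      then show ?thesis using i unfolding F_def T1_def by simp
    qed
    then show "p$i * T1 = g p q i" using d1[of p q] unfolding T1_def[symmetric]
      by (simp add: field_simps)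
  qed
  have fix2: "\<forall>j\<in>S2. q$j * T2 = h p q j"
  proof
    fix j assume j: "j \<in> S2"
    have "(q$j + h p q j) / (1 + T2) = q$j"
    proof -
      have "snd (F (p, q)) $ j = q $ j" using z(2) pq by simp
      then show ?thesis using j unfolding F_def T2_def by simp
    qed
    then show "q$j * T2 = h p q j" using d2[of p q] unfolding T2_def[symmetric]
      by (simp add: field_simps)
  qed
  have r1: "\<forall>i\<in>S1. val p q \<le> (\<Sum>j\<in>UNIV. A$i$j * q$j)"
    by (rule fp_aux[where p="\<lambda>i. p$i" and T=T1])
      (use pK fix1 in \<open>auto simp: simplexS_def g_def val_def\<close>)
  have valq: "(\<Sum>j\<in>UNIV. q$j * (- (\<Sum>i\<in>UNIV. p$i * A$i$j))) = - val p q"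
  proof -
    have "(\<Sum>j\<in>UNIV. q$j * (- (\<Sum>i\<in>UNIV. p$i * A$i$j))) = - (\<Sum>j\<in>UNIV. \<Sum>i\<in>UNIV. p$i * A$i$j * q$j)"
      by (simp add: sum_distrib_left sum_negf mult_ac)
    also have "\<dots> = - (\<Sum>i\<in>UNIV. \<Sum>j\<in>UNIV. p$i * A$i$j * q$j)"
      by (subst sum.swap) (rule refl)
    also have "\<dots> = - val p q" by (simp add: val_def sum_distrib_left mult_ac)
    finally show ?thesis .
  qed
  have r2: "\<forall>j\<in>S2. - val p q \<le> - (\<Sum>i\<in>UNIV. p$i * A$i$j)"
    by (rule fp_aux[where p="\<lambda>j. q$j" and T=T2 and c="\<lambda>j. - (\<Sum>i\<in>UNIV. p$i * A$i$j)"])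
      (use qK fix2 valq in \<open>auto simp: simplexS_def h_def\<close>)
  show ?thesis
    using pK qK r1 r2 by (intro exI[of _ p] exI[of _ q] exI[of _ "val p q"]) auto
qed


lemma sum_pair_UNIV:
  "(\<Sum>s\<in>(UNIV::('a::finite \<times> 'b::finite) set). f s) = (\<Sum>a\<in>UNIV. \<Sum>b\<in>UNIV. f (a, b))"
  by (subst sum.cartesian_product) simp

lemma avg_bound:
  fixes y :: "'i::finite \<Rightarrow> real"
  assumes "\<forall>i. 0 \<le> y i" "sum y UNIV = 1" "\<forall>i. \<bar>c i\<bar> \<le> B"
  shows "-B \<le> (\<Sum>i\<in>UNIV. y i * c i)" "(\<Sum>i\<in>UNIV. y i * c i) \<le> B"
proof -
  have cb: "-B \<le> c i" "c i \<le> B" for i using assms(3)[rule_format, of i] by (simp_all add: abs_le_iff)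
  have "(\<Sum>i\<in>UNIV. y i * (-B)) \<le> (\<Sum>i\<in>UNIV. y i * c i)"
    using assms cb by (intro sum_mono mult_left_mono) auto
  moreover have "(\<Sum>i\<in>UNIV. y i * (-B)) = -B" using assms(2) by (simp add: sum_negf sum_distrib_right[symmetric])
  ultimately show "-B \<le> (\<Sum>i\<in>UNIV. y i * c i)" by simp
  have "(\<Sum>i\<in>UNIV. y i * c i) \<le> (\<Sum>i\<in>UNIV. y i * B)"
    using assms cb by (intro sum_mono mult_left_mono) auto
  then show "(\<Sum>i\<in>UNIV. y i * c i) \<le> B" using assms(2) by (simp add: sum_distrib_right[symmetric])
qed

lemma abs_entry_le: "\<bar>A$i$j\<bar> \<le> (\<Sum>i\<in>UNIV. \<Sum>j\<in>UNIV. \<bar>(A::real^'m::finite^'n::finite)$i$j\<bar>)"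
proof -
  have "\<bar>A$i$j\<bar> \<le> (\<Sum>j\<in>UNIV. \<bar>A$i$j\<bar>)" by (rule member_le_sum) auto
  also have "\<dots> \<le> (\<Sum>i\<in>UNIV. \<Sum>j\<in>UNIV. \<bar>A$i$j\<bar>)"
    by (rule member_le_sum[where f="\<lambda>i. \<Sum>j\<in>UNIV. \<bar>A$i$j\<bar>"]) (auto intro: sum_nonneg)
  finally show ?thesis .
qed

locale cls =
  fixes eta1 eta2 :: real and A :: "real^'m::finite^'n::finite" and S1 :: "'n set" and S2 :: "'m set"
    and p :: "real^'n" and q :: "real^'m" and w :: real
  assumes eta1: "eta1 > 0" and eta2: "eta2 > 0"
    and inj: "inj (\<lambda>(i, j). A$i$j)"
    and pS: "p \<in> simplexS S1" and qS: "q \<in> simplexS S2"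
    and pw: "\<forall>j\<in>S2. (\<Sum>i\<in>UNIV. p$i * A$i$j) \<le> w" and qw: "\<forall>i\<in>S1. w \<le> (\<Sum>j\<in>UNIV. A$i$j * q$j)"
    and nontriv: "(\<exists>i k. i \<in> S1 \<and> k \<in> S1 \<and> i \<noteq> k) \<or> (\<exists>j l. j \<in> S2 \<and> l \<in> S2 \<and> j \<noteq> l)"
begin

definition C where
  "C = {x. x \<in> profiles \<and> (\<forall>i. 0 < fst x $ i \<longleftrightarrow> i \<in> S1) \<and> (\<forall>j. 0 < snd x $ j \<longleftrightarrow> j \<in> S2)}"

definition Psi where
  "Psi x = - (\<Sum>i\<in>UNIV. p$i * ln (fst x $ i)) / eta1 - (\<Sum>j\<in>UNIV. q$j * ln (snd x $ j)) / eta2"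

definition Z1 where "Z1 x j = (\<Sum>i\<in>UNIV. fst x $ i * exp (eta1 * A$i$j))"
definition Z2 where "Z2 x i = (\<Sum>j\<in>UNIV. snd x $ j * exp (eta2 * - A$i$j))"

definition dl where
  "dl x s = - (\<Sum>i\<in>UNIV. p$i * A$i$(snd s)) + ln (Z1 x (snd s)) / eta1
            + (\<Sum>j\<in>UNIV. q$j * A$(fst s)$j) + ln (Z2 x (fst s)) / eta2"

definition BB where "BB = (\<Sum>i\<in>UNIV. \<Sum>j\<in>UNIV. \<bar>A$i$j\<bar>)"

lemma step_eq: "smwu_step eta1 eta2 A s x =
  (mwu_update eta1 (\<lambda>t. A$t$(snd s)) (fst x), mwu_update eta2 (\<lambda>t. - (A$(fst s)$t)) (snd x))"
  by (simp add: smwu_step_def)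

lemma step_in_C: "x \<in> C \<Longrightarrow> smwu_step eta1 eta2 A s x \<in> C"
  unfolding C_def profiles_def step_eq
  by (auto simp: mwu_mixed mwu_pos_iff)

lemma step_C_back: "x \<in> profiles \<Longrightarrow> smwu_step eta1 eta2 A s x \<in> C \<Longrightarrow> x \<in> C"
  unfolding C_def profiles_def step_eq
  by (auto simp: mwu_mixed mwu_pos_iff)

lemma C_profiles: "x \<in> C \<Longrightarrow> x \<in> profiles" by (simp add: C_def)

lemma p_props: "\<forall>i. 0 \<le> p$i" "\<forall>i. i \<notin> S1 \<longrightarrow> p$i = 0" "(\<Sum>i\<in>UNIV. p$i) = 1"
  using pS by (auto simp: simplexS_def)
lemma q_props: "\<forall>j. 0 \<le> q$j" "\<forall>j. j \<notin> S2 \<longrightarrow> q$j = 0" "(\<Sum>j\<in>UNIV. q$j) = 1"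
  using qS by (auto simp: simplexS_def)

lemma x_props:
  assumes "x \<in> profiles"
  shows "\<forall>i. 0 \<le> fst x $ i" "(\<Sum>i\<in>UNIV. fst x $ i) = 1" "\<forall>j. 0 \<le> snd x $ j" "(\<Sum>j\<in>UNIV. snd x $ j) = 1"
  using assms by (auto simp: profiles_def mixed_strategy_def)

lemma Psi_nonneg:
  assumes "x \<in> C" shows "0 \<le> Psi x"
proof -
  have xp: "x \<in> profiles" using assms by (simp add: C_def)
  have le1: "fst x $ i \<le> 1" for i
    using member_le_sum[of i UNIV "\<lambda>i. fst x $ i"] x_props[OF xp] by auto
  have le2: "snd x $ j \<le> 1" for j
    using member_le_sum[of j UNIV "\<lambda>j. snd x $ j"] x_props[OF xp] by auto
  have "(\<Sum>i\<in>UNIV. p$i * ln (fst x $ i)) \<le> 0"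
  proof (rule sum_nonpos)
    fix i show "p$i * ln (fst x $ i) \<le> 0"
    proof (cases "i \<in> S1")
      case True
      then have "0 < fst x $ i" using assms by (simp add: C_def)
      then have "ln (fst x $ i) \<le> 0" using le1[of i] by simp
      then show ?thesis using p_props(1) by (simp add: mult_nonneg_nonpos)
    next
      case False then show ?thesis using p_props(2) by simp
    qed
  qed
  moreover have "(\<Sum>j\<in>UNIV. q$j * ln (snd x $ j)) \<le> 0"
  proof (rule sum_nonpos)
    fix j show "q$j * ln (snd x $ j) \<le> 0"
    proof (cases "j \<in> S2")
      case True
      then have "0 < snd x $ j" using assms by (simp add: C_def)
      then have "ln (snd x $ j) \<le> 0" using le2[of j] by simp
      then show ?thesis using q_props(1) by (simp add: mult_nonneg_nonpos)
    next
      case False then show ?thesis using q_props(2) by simp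
    qed
  qed
  ultimately have "(\<Sum>i\<in>UNIV. p$i * ln (fst x $ i)) / eta1 \<le> 0" "(\<Sum>j\<in>UNIV. q$j * ln (snd x $ j)) / eta2 \<le> 0"
    using eta1 eta2 by (simp_all add: divide_nonpos_pos)
  then show ?thesis unfolding Psi_def by linarith
qed

lemma Psi_step:
  assumes "x \<in> C" shows "Psi (smwu_step eta1 eta2 A s x) = Psi x + dl x s"
proof -
  have xp: "x \<in> profiles" using assms by (simp add: C_def)
  have m1: "mixed_strategy (fst x)" and m2: "mixed_strategy (snd x)" using xp by (auto simp: profiles_def)
  have e1: "(\<Sum>i\<in>UNIV. p$i * ln (mwu_update eta1 (\<lambda>t. A$t$(snd s)) (fst x) $ i))
      = (\<Sum>i\<in>UNIV. p$i * ln (fst x $ i)) + eta1 * (\<Sum>i\<in>UNIV. p$i * A$i$(snd s)) - ln (Z1 x (snd s))"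
  proof -
    have "(\<Sum>i\<in>UNIV. p$i * ln (mwu_update eta1 (\<lambda>t. A$t$(snd s)) (fst x) $ i))
       = (\<Sum>i\<in>UNIV. p$i * ln (fst x $ i) + eta1 * (p$i * A$i$(snd s)) - p$i * ln (Z1 x (snd s)))"
    proof (rule sum.cong[OF refl])
      fix i
      show "p$i * ln (mwu_update eta1 (\<lambda>t. A$t$(snd s)) (fst x) $ i)
          = p$i * ln (fst x $ i) + eta1 * (p$i * A$i$(snd s)) - p$i * ln (Z1 x (snd s))"
      proof (cases "i \<in> S1")
        case True
        then have "0 < fst x $ i" using assms by (simp add: C_def)
        have L: "ln (mwu_update eta1 (\<lambda>t. A$t$(snd s)) (fst x) $ i) = ln (fst x $ i) + eta1 * A$i$(snd s) - ln (Z1 x (snd s))"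
          using mwu_ln[OF m1 \<open>0 < fst x $ i\<close>, of eta1 "\<lambda>t. A$t$(snd s)"] unfolding Z1_def by simp
        show ?thesis by (simp add: L algebra_simps)
      next
        case False then show ?thesis using p_props(2) by simp
      qed
    qed
    also have "\<dots> = (\<Sum>i\<in>UNIV. p$i * ln (fst x $ i)) + eta1 * (\<Sum>i\<in>UNIV. p$i * A$i$(snd s)) - (\<Sum>i\<in>UNIV. p$i) * ln (Z1 x (snd s))"
      by (simp add: sum.distrib sum_subtractf sum_distrib_left sum_distrib_right)
    finally show ?thesis using p_props(3) by simp
  qed
  have e2: "(\<Sum>j\<in>UNIV. q$j * ln (mwu_update eta2 (\<lambda>t. - (A$(fst s)$t)) (snd x) $ j))
      = (\<Sum>j\<in>UNIV. q$j * ln (snd x $ j)) - eta2 * (\<Sum>j\<in>UNIV. q$j * A$(fst s)$j) - ln (Z2 x (fst s))"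
  proof -
    have "(\<Sum>j\<in>UNIV. q$j * ln (mwu_update eta2 (\<lambda>t. - (A$(fst s)$t)) (snd x) $ j))
       = (\<Sum>j\<in>UNIV. q$j * ln (snd x $ j) - eta2 * (q$j * A$(fst s)$j) - q$j * ln (Z2 x (fst s)))"
    proof (rule sum.cong[OF refl])
      fix j
      show "q$j * ln (mwu_update eta2 (\<lambda>t. - (A$(fst s)$t)) (snd x) $ j)
          = q$j * ln (snd x $ j) - eta2 * (q$j * A$(fst s)$j) - q$j * ln (Z2 x (fst s))"
      proof (cases "j \<in> S2")
        case True
        then have "0 < snd x $ j" using assms by (simp add: C_def)
        have L: "ln (mwu_update eta2 (\<lambda>t. - (A$(fst s)$t)) (snd x) $ j) = ln (snd x $ j) + eta2 * (- A$(fst s)$j) - ln (Z2 x (fst s))"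
          using mwu_ln[OF m2 \<open>0 < snd x $ j\<close>, of eta2 "\<lambda>t. - (A$(fst s)$t)"] unfolding Z2_def by simp
        show ?thesis by (simp add: L algebra_simps)
      next
        case False then show ?thesis using q_props(2) by simp
      qed
    qed
    also have "\<dots> = (\<Sum>j\<in>UNIV. q$j * ln (snd x $ j)) - eta2 * (\<Sum>j\<in>UNIV. q$j * A$(fst s)$j) - (\<Sum>j\<in>UNIV. q$j) * ln (Z2 x (fst s))"
      by (simp add: sum.distrib sum_subtractf sum_distrib_left sum_distrib_right)
    finally show ?thesis using q_props(3) by simp
  qed
  show ?thesis
    unfolding Psi_def step_eq fst_conv snd_conv e1 e2 dl_def
    using eta1 eta2 by (simp add: field_simps)
qed

end


context cls begin

lemma jz1:
  assumes xp: "x \<in> profiles"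
  shows "(\<Sum>i\<in>UNIV. fst x $ i * A$i$b) \<le> ln (Z1 x b) / eta1"
    and "(\<exists>i k. i \<in> S1 \<and> k \<in> S1 \<and> i \<noteq> k) \<Longrightarrow> x \<in> C \<Longrightarrow> (\<Sum>i\<in>UNIV. fst x $ i * A$i$b) < ln (Z1 x b) / eta1"
proof -
  have eq: "(\<Sum>i\<in>UNIV. fst x $ i * (eta1 * A$i$b)) = eta1 * (\<Sum>i\<in>UNIV. fst x $ i * A$i$b)"
    by (simp add: sum_distrib_left mult_ac)
  have J: "(\<Sum>i\<in>UNIV. fst x $ i * (eta1 * A$i$b)) \<le> ln (Z1 x b)"
    unfolding Z1_def by (rule jensen_exp(1)) (use x_props[OF xp] in auto)
  then show "(\<Sum>i\<in>UNIV. fst x $ i * A$i$b) \<le> ln (Z1 x b) / eta1"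
    using eta1 unfolding eq by (simp add: pos_le_divide_eq mult.commute)
  assume ex: "\<exists>i k. i \<in> S1 \<and> k \<in> S1 \<and> i \<noteq> k" and xC: "x \<in> C"
  then obtain i k where ik: "i \<in> S1" "k \<in> S1" "i \<noteq> k" by blast
  have "A$i$b \<noteq> A$k$b" using inj ik(3) unfolding inj_def by fastforce
  moreover have "0 < fst x $ i" "0 < fst x $ k" using xC ik by (auto simp: C_def)
  ultimately have W: "\<exists>i'\<in>UNIV. \<exists>k'\<in>UNIV. 0 < fst x $ i' \<and> 0 < fst x $ k' \<and> eta1 * A$i'$b \<noteq> eta1 * A$k'$b"
    using eta1 by auto
  have J2: "(\<Sum>i\<in>UNIV. fst x $ i * (eta1 * A$i$b)) < ln (Z1 x b)"
    unfolding Z1_def by (rule jensen_exp(2)[OF _ _ _ W]) (use x_props[OF xp] in auto)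
  then show "(\<Sum>i\<in>UNIV. fst x $ i * A$i$b) < ln (Z1 x b) / eta1"
    using eta1 unfolding eq by (simp add: pos_less_divide_eq mult.commute)
qed

lemma jz2:
  assumes xp: "x \<in> profiles"
  shows "(\<Sum>j\<in>UNIV. snd x $ j * (- A$a$j)) \<le> ln (Z2 x a) / eta2"
    and "(\<exists>j l. j \<in> S2 \<and> l \<in> S2 \<and> j \<noteq> l) \<Longrightarrow> x \<in> C \<Longrightarrow> (\<Sum>j\<in>UNIV. snd x $ j * (- A$a$j)) < ln (Z2 x a) / eta2"
proof -
  have eq: "(\<Sum>j\<in>UNIV. snd x $ j * (eta2 * - A$a$j)) = eta2 * (\<Sum>j\<in>UNIV. snd x $ j * (- A$a$j))"
    by (simp add: sum_distrib_left mult_ac)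
  have J: "(\<Sum>j\<in>UNIV. snd x $ j * (eta2 * - A$a$j)) \<le> ln (Z2 x a)"
    unfolding Z2_def by (rule jensen_exp(1)) (use x_props[OF xp] in auto)
  then show "(\<Sum>j\<in>UNIV. snd x $ j * (- A$a$j)) \<le> ln (Z2 x a) / eta2"
    using eta2 unfolding eq by (simp add: pos_le_divide_eq mult.commute)
  assume ex: "\<exists>j l. j \<in> S2 \<and> l \<in> S2 \<and> j \<noteq> l" and xC: "x \<in> C"
  then obtain j l where jl: "j \<in> S2" "l \<in> S2" "j \<noteq> l" by blast
  have "A$a$j \<noteq> A$a$l" using inj jl(3) unfolding inj_def by fastforce
  moreover have "0 < snd x $ j" "0 < snd x $ l" using xC jl by (auto simp: C_def)
  ultimately have W: "\<exists>j'\<in>UNIV. \<exists>l'\<in>UNIV. 0 < snd x $ j' \<and> 0 < snd x $ l' \<and> eta2 * - A$a$j' \<noteq> eta2 * - A$a$l'"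
    using eta2 by auto
  have J2: "(\<Sum>j\<in>UNIV. snd x $ j * (eta2 * - A$a$j)) < ln (Z2 x a)"
    unfolding Z2_def by (rule jensen_exp(2)[OF _ _ _ W]) (use x_props[OF xp] in auto)
  then show "(\<Sum>j\<in>UNIV. snd x $ j * (- A$a$j)) < ln (Z2 x a) / eta2"
    using eta2 unfolding eq by (simp add: pos_less_divide_eq mult.commute)
qed

lemma dl_lower:
  assumes xC: "x \<in> C" shows "- (4 * BB) \<le> dl x s"
proof -
  have xp: "x \<in> profiles" using xC by (simp add: C_def)
  have ab: "\<forall>i. \<bar>A$i$j\<bar> \<le> BB" "\<forall>j. \<bar>A$i$j\<bar> \<le> BB" "\<forall>j. \<bar>- A$i$j\<bar> \<le> BB" for i j
    using abs_entry_le[of A] unfolding BB_def by auto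
  have t1: "(\<Sum>i\<in>UNIV. p$i * A$i$(snd s)) \<le> BB"
    by (rule avg_bound(2)[where y="\<lambda>i. p$i"]) (use p_props ab in auto)
  have t2: "- BB \<le> (\<Sum>i\<in>UNIV. fst x $ i * A$i$(snd s))"
    by (rule avg_bound(1)[where y="\<lambda>i. fst x $ i"]) (use x_props[OF xp] ab in auto)
  have t3: "- BB \<le> (\<Sum>j\<in>UNIV. q$j * A$(fst s)$j)"
    by (rule avg_bound(1)[where y="\<lambda>j. q$j"]) (use q_props ab in auto)
  have t4: "- BB \<le> (\<Sum>j\<in>UNIV. snd x $ j * (- A$(fst s)$j))"
    by (rule avg_bound(1)[where y="\<lambda>j. snd x $ j"]) (use x_props[OF xp] ab in auto)
  show ?thesis
    using t1 t2 t3 t4 jz1(1)[OF xp, of "snd s"] jz2(1)[OF xp, of "fst s"] unfolding dl_def by linarith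
qed

lemma drift_pos:
  assumes xC: "x \<in> C"
  shows "0 < (\<Sum>s\<in>UNIV. (fst x $ fst s * snd x $ snd s) * dl x s)"
proof -
  have xp: "x \<in> profiles" using xC by (simp add: C_def)
  note xpr = x_props[OF xp]
  define F where "F b = - (\<Sum>i\<in>UNIV. p$i * A$i$b) + ln (Z1 x b) / eta1" for b
  define G where "G a = (\<Sum>j\<in>UNIV. q$j * A$a$j) + ln (Z2 x a) / eta2" for a
  define LF where "LF b = - (\<Sum>i\<in>UNIV. p$i * A$i$b) + (\<Sum>i\<in>UNIV. fst x $ i * A$i$b)" for b
  define LG where "LG a = (\<Sum>j\<in>UNIV. q$j * A$a$j) + (\<Sum>j\<in>UNIV. snd x $ j * (- A$a$j))" for a
  have split: "(\<Sum>s\<in>UNIV. (fst x $ fst s * snd x $ snd s) * dl x s)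
      = (\<Sum>b\<in>UNIV. snd x $ b * F b) + (\<Sum>a\<in>UNIV. fst x $ a * G a)"
  proof -
    have "(\<Sum>s\<in>UNIV. (fst x $ fst s * snd x $ snd s) * dl x s)
        = (\<Sum>a\<in>UNIV. \<Sum>b\<in>UNIV. (fst x $ a * snd x $ b) * (F b + G a))"
      unfolding sum_pair_UNIV by (simp add: dl_def F_def G_def algebra_simps)
    also have "\<dots> = (\<Sum>a\<in>UNIV. fst x $ a * (\<Sum>b\<in>UNIV. snd x $ b * F b) + fst x $ a * G a * (\<Sum>b\<in>UNIV. snd x $ b))"
      by (simp add: sum.distrib sum_distrib_left algebra_simps)
    also have "\<dots> = (\<Sum>a\<in>UNIV. fst x $ a * (\<Sum>b\<in>UNIV. snd x $ b * F b) + fst x $ a * G a)"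
      using xpr by simp
    also have "\<dots> = (\<Sum>a\<in>UNIV. fst x $ a) * (\<Sum>b\<in>UNIV. snd x $ b * F b) + (\<Sum>a\<in>UNIV. fst x $ a * G a)"
      by (simp add: sum.distrib sum_distrib_right)
    finally show ?thesis using xpr by simp
  qed
  have FL: "LF b \<le> F b" for b using jz1(1)[OF xp, of b] unfolding F_def LF_def by linarith
  have GL: "LG a \<le> G a" for a using jz2(1)[OF xp, of a] unfolding G_def LG_def by linarith
  have sF: "(\<Sum>b\<in>UNIV. snd x $ b * LF b) \<le> (\<Sum>b\<in>UNIV. snd x $ b * F b)"
    using xpr FL by (intro sum_mono mult_left_mono) auto
  have sG: "(\<Sum>a\<in>UNIV. fst x $ a * LG a) \<le> (\<Sum>a\<in>UNIV. fst x $ a * G a)"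
    using xpr GL by (intro sum_mono mult_left_mono) auto
  have strict: "(\<Sum>b\<in>UNIV. snd x $ b * LF b) + (\<Sum>a\<in>UNIV. fst x $ a * LG a)
      < (\<Sum>b\<in>UNIV. snd x $ b * F b) + (\<Sum>a\<in>UNIV. fst x $ a * G a)"
    using nontriv
  proof
    assume ex: "\<exists>i k. i \<in> S1 \<and> k \<in> S1 \<and> i \<noteq> k"
    obtain b0 where b0: "b0 \<in> S2" using q_props by (metis sum.neutral UNIV_I zero_neq_one)
    have "0 < snd x $ b0" using xC b0 by (simp add: C_def)
    have "(\<Sum>b\<in>UNIV. snd x $ b * LF b) < (\<Sum>b\<in>UNIV. snd x $ b * F b)"
    proof (rule sum_strict_mono_ex1)
      show "\<forall>b\<in>UNIV. snd x $ b * LF b \<le> snd x $ b * F b" using xpr FL by (auto intro: mult_left_mono)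
      show "\<exists>b\<in>UNIV. snd x $ b * LF b < snd x $ b * F b"
        using jz1(2)[OF xp ex xC, of b0] \<open>0 < snd x $ b0\<close> unfolding F_def LF_def
        by (intro bexI[of _ b0] mult_strict_left_mono) auto
    qed simp
    then show ?thesis using sG by linarith
  next
    assume ex: "\<exists>j l. j \<in> S2 \<and> l \<in> S2 \<and> j \<noteq> l"
    obtain a0 where a0: "a0 \<in> S1" using p_props by (metis sum.neutral UNIV_I zero_neq_one)
    have "0 < fst x $ a0" using xC a0 by (simp add: C_def)
    have "(\<Sum>a\<in>UNIV. fst x $ a * LG a) < (\<Sum>a\<in>UNIV. fst x $ a * G a)"
    proof (rule sum_strict_mono_ex1)
      show "\<forall>a\<in>UNIV. fst x $ a * LG a \<le> fst x $ a * G a" using xpr GL by (auto intro: mult_left_mono)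
      show "\<exists>a\<in>UNIV. fst x $ a * LG a < fst x $ a * G a"
        using jz2(2)[OF xp ex xC, of a0] \<open>0 < fst x $ a0\<close> unfolding G_def LG_def
        by (intro bexI[of _ a0] mult_strict_left_mono) auto
    qed simp
    then show ?thesis using sF by linarith
  qed
  have cross: "(\<Sum>b\<in>UNIV. snd x $ b * (\<Sum>i\<in>UNIV. fst x $ i * A$i$b))
             = (\<Sum>a\<in>UNIV. fst x $ a * (\<Sum>j\<in>UNIV. snd x $ j * A$a$j))"
  proof -
    have "(\<Sum>b\<in>UNIV. snd x $ b * (\<Sum>i\<in>UNIV. fst x $ i * A$i$b)) = (\<Sum>b\<in>UNIV. \<Sum>i\<in>UNIV. fst x $ i * snd x $ b * A$i$b)"
      by (simp add: sum_distrib_left mult_ac)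
    also have "\<dots> = (\<Sum>i\<in>UNIV. \<Sum>b\<in>UNIV. fst x $ i * snd x $ b * A$i$b)"
      by (subst sum.swap) (rule refl)
    also have "\<dots> = (\<Sum>a\<in>UNIV. fst x $ a * (\<Sum>j\<in>UNIV. snd x $ j * A$a$j))"
      by (simp add: sum_distrib_left mult_ac)
    finally show ?thesis .
  qed
  have pA: "(\<Sum>b\<in>UNIV. snd x $ b * (\<Sum>i\<in>UNIV. p$i * A$i$b)) \<le> w"
  proof -
    have "(\<Sum>b\<in>UNIV. snd x $ b * (\<Sum>i\<in>UNIV. p$i * A$i$b)) \<le> (\<Sum>b\<in>UNIV. snd x $ b * w)"
    proof (rule sum_mono)
      fix b :: 'm
      show "snd x $ b * (\<Sum>i\<in>UNIV. p$i * A$i$b) \<le> snd x $ b * w"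
      proof (cases "b \<in> S2")
        case True then show ?thesis using pw xpr by (intro mult_left_mono) auto
      next
        case False then have "snd x $ b = 0" using xC xpr(3) by (auto simp: C_def less_le)
        then show ?thesis by simp
      qed
    qed
    also have "\<dots> = w" using xpr by (simp add: sum_distrib_right[symmetric])
    finally show ?thesis .
  qed
  have Aq: "w \<le> (\<Sum>a\<in>UNIV. fst x $ a * (\<Sum>j\<in>UNIV. q$j * A$a$j))"
  proof -
    have "(\<Sum>a\<in>UNIV. fst x $ a * w) \<le> (\<Sum>a\<in>UNIV. fst x $ a * (\<Sum>j\<in>UNIV. q$j * A$a$j))"
    proof (rule sum_mono)
      fix a :: 'n
      show "fst x $ a * w \<le> fst x $ a * (\<Sum>j\<in>UNIV. q$j * A$a$j)"
      proof (cases "a \<in> S1")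
        case True then show ?thesis using qw xpr by (intro mult_left_mono) (auto simp: mult.commute)
      next
        case False then have "fst x $ a = 0" using xC xpr(1) by (auto simp: C_def less_le)
        then show ?thesis by simp
      qed
    qed
    moreover have "(\<Sum>a\<in>UNIV. fst x $ a * w) = w" using xpr by (simp add: sum_distrib_right[symmetric])
    ultimately show ?thesis by simp
  qed
  have e1: "(\<Sum>b\<in>UNIV. snd x $ b * LF b) = (\<Sum>b\<in>UNIV. snd x $ b * (\<Sum>i\<in>UNIV. fst x $ i * A$i$b)) - (\<Sum>b\<in>UNIV. snd x $ b * (\<Sum>i\<in>UNIV. p$i * A$i$b))"
    unfolding LF_def by (simp add: right_diff_distrib sum_subtractf)
  have e2: "(\<Sum>a\<in>UNIV. fst x $ a * LG a) = (\<Sum>a\<in>UNIV. fst x $ a * (\<Sum>j\<in>UNIV. q$j * A$a$j)) - (\<Sum>a\<in>UNIV. fst x $ a * (\<Sum>j\<in>UNIV. snd x $ j * A$a$j))"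
    unfolding LG_def by (simp add: sum_negf right_diff_distrib sum_subtractf)
  have "0 \<le> (\<Sum>b\<in>UNIV. snd x $ b * LF b) + (\<Sum>a\<in>UNIV. fst x $ a * LG a)"
    using e1 e2 cross pA Aq by linarith
  then show ?thesis using strict split by linarith
qed

end


context cls begin

lemma C_meas[measurable]: "C \<in> sets borel"
  unfolding C_def profiles_def mixed_strategy_def by measurable

lemma Psi_meas[measurable]: "Psi \<in> borel_measurable borel"
  unfolding Psi_def by measurable

lemma dl_meas[measurable]: "(\<lambda>x. dl x s) \<in> borel_measurable borel"
  unfolding dl_def Z1_def Z2_def by measurable

end


context cls begin

lemma W_props:
  assumes "x \<in> profiles"
  shows "\<And>s. 0 \<le> fst x $ fst s * snd x $ snd s" "(\<Sum>s\<in>UNIV. fst x $ fst s * snd x $ snd s) = 1"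
proof -
  note xpr = x_props[OF assms]
  show "\<And>s. 0 \<le> fst x $ fst s * snd x $ snd s" using xpr by simp
  have "(\<Sum>s\<in>UNIV. fst x $ fst s * snd x $ snd s) = (\<Sum>a\<in>UNIV. \<Sum>b\<in>UNIV. fst x $ a * snd x $ b)"
    by (simp add: sum_pair_UNIV)
  also have "\<dots> = (\<Sum>a\<in>UNIV. fst x $ a) * (\<Sum>b\<in>UNIV. snd x $ b)"
    by (simp add: sum_product)
  finally show "(\<Sum>s\<in>UNIV. fst x $ fst s * snd x $ snd s) = 1" using xpr by simp
qed

lemma BB_nonneg: "0 \<le> BB" unfolding BB_def by (intro sum_nonneg) auto

lemma C_null:
  fixes \<pi> :: "((real^'n) \<times> (real^'m)) measure"
  assumes stat: "smwu_stationary eta1 eta2 A \<pi>" and borel: "sets \<pi> = sets borel"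
    and prob: "prob_space \<pi>" and AEp: "AE x in \<pi>. x \<in> profiles"
  shows "emeasure \<pi> C = 0"
proof -
  define K where "K = 4 * BB"
  have K0: "0 \<le> K" using BB_nonneg by (simp add: K_def)
  define W where "W x s = fst x $ fst s * snd x $ snd s" for x :: "(real^'n) \<times> (real^'m)" and s :: "'n \<times> 'm"
  define f where "f M x = indicator C x * ennreal (min (Psi x) M)" for M :: real and x
  define g where "g M x = indicator C x * ennreal ((\<Sum>s\<in>UNIV. W x s * min (Psi (smwu_step eta1 eta2 A s x)) M) - min (Psi x) M + K)"
    for M :: real and x
  define D where "D x = (\<Sum>s\<in>UNIV. W x s * dl x s)" for x
  have Csets: "C \<in> sets \<pi>" using borel by simp
  have fmeas[measurable]: "f M \<in> borel_measurable borel" for M unfolding f_def by measurable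
  have gmeas[measurable]: "g M \<in> borel_measurable borel" for M unfolding g_def W_def by measurable
  have Dmeas[measurable]: "D \<in> borel_measurable borel" unfolding D_def W_def by measurable
  have mc: "\<And>h. h \<in> borel_measurable borel \<Longrightarrow> h \<in> borel_measurable \<pi>"
    using measurable_cong_sets[OF borel refl] by blast
  have sp: "emeasure \<pi> (space \<pi>) = 1" using prob by (simp add: prob_space.emeasure_space_1)
  have emC_fin: "emeasure \<pi> C \<noteq> \<infinity>"
    using prob_space.emeasure_le_1[OF prob, of C] by (auto simp: top_unique)
  have pw: "g M x + f M x = (\<Sum>s\<in>UNIV. ennreal (W x s) * f M (smwu_step eta1 eta2 A s x)) + indicator C x * ennreal K"
    if xp: "x \<in> profiles" and M0: "0 \<le> M" for x M
  proof (cases "x \<in> C")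
    case True
    note Wp = W_props[OF xp, folded W_def]
    have stC: "smwu_step eta1 eta2 A s x \<in> C" for s by (rule step_in_C[OF True])
    have Psi0: "0 \<le> Psi x" by (rule Psi_nonneg[OF True])
    have Psi0': "0 \<le> Psi (smwu_step eta1 eta2 A s x)" for s by (rule Psi_nonneg[OF stC])
    define a where "a = (\<Sum>s\<in>UNIV. W x s * min (Psi (smwu_step eta1 eta2 A s x)) M)"
    define b where "b = min (Psi x) M"
    have b0: "0 \<le> b" using Psi0 M0 by (simp add: b_def)
    have a0: "0 \<le> a" unfolding a_def using Wp Psi0' M0 by (intro sum_nonneg mult_nonneg_nonneg) auto
    have lowb: "b - K \<le> min (Psi (smwu_step eta1 eta2 A s x)) M" for s
      using Psi_step[OF True, of s] dl_lower[OF True, of s] K0 unfolding b_def K_def by linarith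
    have "(\<Sum>s\<in>UNIV. W x s * (b - K)) \<le> a"
      unfolding a_def using Wp lowb by (intro sum_mono mult_left_mono) auto
    moreover have "(\<Sum>s\<in>UNIV. W x s * (b - K)) = b - K"
      using Wp by (simp add: sum_distrib_right[symmetric])
    ultimately have abK: "0 \<le> a - b + K" by linarith
    have "(\<Sum>s\<in>UNIV. ennreal (W x s) * f M (smwu_step eta1 eta2 A s x))
        = (\<Sum>s\<in>UNIV. ennreal (W x s * min (Psi (smwu_step eta1 eta2 A s x)) M))"
      using stC Wp by (intro sum.cong refl) (simp add: f_def ennreal_mult')
    also have "\<dots> = ennreal a"
      unfolding a_def using Wp Psi0' M0 by (intro sum_ennreal) auto
    finally have R: "(\<Sum>s\<in>UNIV. ennreal (W x s) * f M (smwu_step eta1 eta2 A s x)) = ennreal a" .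
    have "g M x + f M x = ennreal (a - b + K) + ennreal b"
      using True by (simp add: g_def f_def a_def b_def)
    also have "\<dots> = ennreal (a + K)" using abK b0 by (simp flip: ennreal_plus)
    also have "\<dots> = ennreal a + ennreal K" using a0 K0 by simp
    finally show ?thesis using R True by simp
  next
    case False
    have "smwu_step eta1 eta2 A s x \<notin> C" for s using step_C_back[OF xp] False by blast
    then show ?thesis using False by (simp add: f_def g_def)
  qed
  have intg: "(\<integral>\<^sup>+x. g M x \<partial>\<pi>) = ennreal K * emeasure \<pi> C" if M0: "0 \<le> M" for M
  proof -
    have "(\<integral>\<^sup>+x. g M x \<partial>\<pi>) + (\<integral>\<^sup>+x. f M x \<partial>\<pi>) = (\<integral>\<^sup>+x. g M x + f M x \<partial>\<pi>)"
      by (rule nn_integral_add[symmetric]) (auto intro: mc)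
    also have "\<dots> = (\<integral>\<^sup>+x. (\<Sum>s\<in>UNIV. ennreal (W x s) * f M (smwu_step eta1 eta2 A s x)) + ennreal K * indicator C x \<partial>\<pi>)"
      using AEp by (intro nn_integral_cong_AE) (auto elim!: eventually_mono simp: pw[OF _ M0] mult.commute)
    also have "\<dots> = (\<integral>\<^sup>+x. (\<Sum>s\<in>UNIV. ennreal (W x s) * f M (smwu_step eta1 eta2 A s x)) \<partial>\<pi>) + (\<integral>\<^sup>+x. ennreal K * indicator C x \<partial>\<pi>)"
      by (rule nn_integral_add) (auto intro!: mc simp: W_def)
    also have "(\<integral>\<^sup>+x. (\<Sum>s\<in>UNIV. ennreal (W x s) * f M (smwu_step eta1 eta2 A s x)) \<partial>\<pi>) = (\<integral>\<^sup>+x. f M x \<partial>\<pi>)"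
      unfolding W_def by (rule stat_ext[OF stat borel AEp fmeas])
    also have "(\<integral>\<^sup>+x. ennreal K * indicator C x \<partial>\<pi>) = ennreal K * emeasure \<pi> C"
      using Csets by (rule nn_integral_cmult_indicator)
    finally have E: "(\<integral>\<^sup>+x. g M x \<partial>\<pi>) + (\<integral>\<^sup>+x. f M x \<partial>\<pi>) = (\<integral>\<^sup>+x. f M x \<partial>\<pi>) + ennreal K * emeasure \<pi> C" .
    have "(\<integral>\<^sup>+x. f M x \<partial>\<pi>) \<le> (\<integral>\<^sup>+x. ennreal M \<partial>\<pi>)"
      using M0 by (intro nn_integral_mono) (auto simp: f_def indicator_def)
    also have "\<dots> = ennreal M" using sp by simp
    finally have fin: "(\<integral>\<^sup>+x. f M x \<partial>\<pi>) \<noteq> \<infinity>" by (auto simp: top_unique)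
    show ?thesis using E fin by (simp add: add.commute ennreal_add_left_cancel)
  qed
  have lim: "liminf (\<lambda>n. g (real n) x) = indicator C x * ennreal (D x + K)" for x
  proof (cases "x \<in> C")
    case True
    note xp = C_profiles[OF True]
    note Wp = W_props[OF xp, folded W_def]
    define N where "N = Psi x + (\<Sum>s\<in>UNIV. \<bar>Psi (smwu_step eta1 eta2 A s x)\<bar>)"
    have ev: "eventually (\<lambda>n. g (real n) x = indicator C x * ennreal (D x + K)) sequentially"
      unfolding eventually_sequentially
    proof (intro exI allI impI)
      fix n assume n: "nat \<lceil>N\<rceil> \<le> n"
      then have nN: "N \<le> real n" by linarith
      have Psi0': "0 \<le> Psi (smwu_step eta1 eta2 A s x)" for s by (rule Psi_nonneg[OF step_in_C[OF True]])
      have Psi0: "0 \<le> Psi x" by (rule Psi_nonneg[OF True])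
      have le1: "Psi (smwu_step eta1 eta2 A s x) \<le> real n" for s
      proof -
        have "\<bar>Psi (smwu_step eta1 eta2 A s x)\<bar> \<le> (\<Sum>s\<in>UNIV. \<bar>Psi (smwu_step eta1 eta2 A s x)\<bar>)"
          by (rule member_le_sum) auto
        then show ?thesis using nN Psi0 unfolding N_def by linarith
      qed
      have le2: "Psi x \<le> real n"
      proof -
        have "0 \<le> (\<Sum>s\<in>UNIV. \<bar>Psi (smwu_step eta1 eta2 A s x)\<bar>)" by (intro sum_nonneg) auto
        then show ?thesis using nN unfolding N_def by linarith
      qed
      have "(\<Sum>s\<in>UNIV. W x s * min (Psi (smwu_step eta1 eta2 A s x)) (real n)) - min (Psi x) (real n)
          = (\<Sum>s\<in>UNIV. W x s * (Psi x + dl x s)) - Psi x"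
        using le1 le2 Psi_step[OF True] by (simp add: min_absorb1)
      also have "\<dots> = D x"
        using Wp by (simp add: D_def distrib_left sum.distrib sum_distrib_right[symmetric])
      finally show "g (real n) x = indicator C x * ennreal (D x + K)"
        by (simp add: g_def)
    qed
    show ?thesis
      by (rule lim_imp_Liminf) (auto intro: tendsto_eventually[OF ev])
  next
    case False
    then show ?thesis by (simp add: g_def Liminf_const)
  qed
  have "(\<integral>\<^sup>+x. indicator C x * ennreal (D x + K) \<partial>\<pi>) = (\<integral>\<^sup>+x. liminf (\<lambda>n. g (real n) x) \<partial>\<pi>)"
    by (simp add: lim)
  also have "\<dots> \<le> liminf (\<lambda>n. (\<integral>\<^sup>+x. g (real n) x \<partial>\<pi>))"
    by (rule nn_integral_liminf) (auto intro: mc)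
  also have "\<dots> = ennreal K * emeasure \<pi> C"
    by (simp add: intg Liminf_const)
  finally have F: "(\<integral>\<^sup>+x. indicator C x * ennreal (D x + K) \<partial>\<pi>) \<le> ennreal K * emeasure \<pi> C" .
  have Dpos: "0 < D x" if "x \<in> C" for x
    unfolding D_def W_def by (rule drift_pos[OF that])
  have "(\<integral>\<^sup>+x. indicator C x * ennreal (D x + K) \<partial>\<pi>)
      = (\<integral>\<^sup>+x. indicator C x * ennreal (D x) + ennreal K * indicator C x \<partial>\<pi>)"
    using Dpos K0 by (intro nn_integral_cong) (auto simp: indicator_def less_imp_le)
  also have "\<dots> = (\<integral>\<^sup>+x. indicator C x * ennreal (D x) \<partial>\<pi>) + ennreal K * emeasure \<pi> C"
    using Csets by (subst nn_integral_add) (auto intro!: mc simp: nn_integral_cmult_indicator)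
  finally have "(\<integral>\<^sup>+x. indicator C x * ennreal (D x) \<partial>\<pi>) + ennreal K * emeasure \<pi> C \<le> 0 + ennreal K * emeasure \<pi> C"
    using F by simp
  then have le: "ennreal K * emeasure \<pi> C + (\<integral>\<^sup>+x. indicator C x * ennreal (D x) \<partial>\<pi>) \<le> ennreal K * emeasure \<pi> C + 0"
    by (simp add: add.commute)
  have nt: "ennreal K * emeasure \<pi> C \<noteq> \<infinity>" using emC_fin by (simp add: ennreal_mult_eq_top_iff)
  have "(\<integral>\<^sup>+x. indicator C x * ennreal (D x) \<partial>\<pi>) \<le> 0"
    using le nt unfolding ennreal_add_left_cancel_le by simp
  then have "(\<integral>\<^sup>+x. indicator C x * ennreal (D x) \<partial>\<pi>) = 0" by simp
  then have "AE x in \<pi>. indicator C x * ennreal (D x) = 0"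
    by (subst (asm) nn_integral_0_iff_AE) (auto intro: mc)
  then have "AE x in \<pi>. x \<notin> C"
  proof (rule eventually_mono)
    fix x assume "indicator C x * ennreal (D x) = 0"
    then show "x \<notin> C" using Dpos[of x] by (auto simp: indicator_def ennreal_eq_0_iff)
  qed
  then show ?thesis
    using Csets by (subst (asm) AE_iff_measurable[of C]) (auto simp: sets_eq_imp_space_eq[OF borel])
qed

end


lemma mwu_axis: "mwu_update e u (axis a 1 :: real^'k::finite) = axis a 1"
proof -
  have Z: "(\<Sum>t\<in>UNIV. (axis a 1 :: real^'k) $ t * exp (e * u t)) = exp (e * u a)"
  proof -
    have "(\<Sum>t\<in>UNIV. (axis a 1 :: real^'k) $ t * exp (e * u t)) = (\<Sum>t\<in>UNIV. if t = a then exp (e * u a) else 0)"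
      by (intro sum.cong refl) (simp add: axis_def)
    also have "\<dots> = exp (e * u a)" by simp
    finally show ?thesis .
  qed
  show ?thesis unfolding vec_eq_iff mwu_comp Z by (simp add: axis_def)
qed

lemma kernel_pure:
  fixes A :: "real^'m::finite^'n::finite"
  assumes "x \<in> pure_profiles"
  shows "smwu_kernel eta1 eta2 A x B = indicator B x"
proof -
  obtain a b where x: "x = (axis a 1 :: real^'n, axis b 1 :: real^'m)"
    using assms by (auto simp: pure_profiles_def)
  have step: "smwu_step eta1 eta2 A (a, b) x = x" by (simp add: x smwu_step_def mwu_axis)
  have "smwu_kernel eta1 eta2 A x B = (\<Sum>s\<in>UNIV. if s = (a, b) then indicator B x else 0)"
    unfolding smwu_kernel_def
  proof (rule sum.cong[OF refl])
    fix s :: "'n \<times> 'm"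
    show "fst x $ fst s * snd x $ snd s * indicator B (smwu_step eta1 eta2 A s x) = (if s = (a, b) then indicator B x else 0)"
      using step by (cases s) (auto simp: x axis_def)
  qed
  also have "\<dots> = indicator B x" by simp
  finally show ?thesis .
qed

lemma profiles_meas[measurable]: "profiles \<in> sets borel"
  unfolding profiles_def mixed_strategy_def by measurable

lemma pure_meas: "pure_profiles \<in> sets (borel :: ((real^'n::finite) \<times> (real^'m::finite)) measure)"
proof -
  have "pure_profiles = (\<lambda>(s1, s2). (axis s1 1 :: real^'n, axis s2 1 :: real^'m)) ` UNIV"
    by (auto simp: pure_profiles_def)
  moreover have "finite ((\<lambda>(s1, s2). (axis s1 1 :: real^'n, axis s2 1 :: real^'m)) ` UNIV)"
    by (rule finite_imageI) simp
  ultimately have "finite (pure_profiles :: ((real^'n) \<times> (real^'m)) set)" by simp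
  then show ?thesis by (intro borel_closed finite_imp_closed)
qed

lemma pure_sub: "pure_profiles \<subseteq> profiles"
  by (auto simp: pure_profiles_def profiles_def mixed_strategy_def axis_def)

theorem theorem7:
  fixes A :: "real^'m::finite^'n::finite"
    and eta1 eta2 :: real
    and \<pi> :: "((real^'n) \<times> (real^'m)) measure"
  assumes eta_pos: "eta1 > 0" "eta2 > 0"
    and distinct_entries: "inj (\<lambda>(i, j). A$i$j)"
    and prob: "prob_space \<pi>"
    and borel: "sets \<pi> = sets borel"
    and on_X: "emeasure \<pi> profiles = 1"
  shows "smwu_stationary eta1 eta2 A \<pi> \<longleftrightarrow> emeasure \<pi> pure_profiles = 1"
proof -
  have sp: "space \<pi> = UNIV" using sets_eq_imp_space_eq[OF borel] by simp
  have Pm: "profiles \<in> sets \<pi>" using borel by simp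
  have Qm: "pure_profiles \<in> sets \<pi>" using borel pure_meas by simp
  have AEp: "AE x in \<pi>. x \<in> profiles"
    using prob_space.AE_iff_emeasure_eq_1[OF prob, of "\<lambda>x. x \<in> profiles"] Pm on_X sp by simp
  show ?thesis
  proof
    assume stat: "smwu_stationary eta1 eta2 A \<pi>"
    define Cs where "Cs S1 S2 = {x. x \<in> profiles \<and> (\<forall>i. 0 < fst x $ i \<longleftrightarrow> i \<in> S1) \<and> (\<forall>j. 0 < snd x $ j \<longleftrightarrow> j \<in> S2)}"
      for S1 :: "'n set" and S2 :: "'m set"
    define NT where "NT S1 S2 = ((\<exists>i k. i \<in> S1 \<and> k \<in> S1 \<and> i \<noteq> k) \<or> (\<exists>j l. j \<in> S2 \<and> l \<in> S2 \<and> j \<noteq> l))"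
      for S1 :: "'n set" and S2 :: "'m set"
    have null: "AE x in \<pi>. x \<notin> Cs S1 S2" if ne: "S1 \<noteq> {}" "S2 \<noteq> {}" and nt: "NT S1 S2" for S1 S2
    proof -
      obtain p q w where pqw: "p \<in> simplexS S1" "q \<in> simplexS S2"
        "\<forall>j\<in>S2. (\<Sum>i\<in>UNIV. p$i * A$i$j) \<le> w" "\<forall>i\<in>S1. w \<le> (\<Sum>j\<in>UNIV. A$i$j * q$j)"
        using minimax_restricted[OF ne, of A] by blast
      interpret cls eta1 eta2 A S1 S2 p q w
        using eta_pos distinct_entries pqw nt unfolding NT_def by unfold_locales auto
      have e: "emeasure \<pi> C = 0" by (rule C_null[OF stat borel prob AEp])
      have "C = Cs S1 S2" by (simp add: C_def Cs_def)
      moreover have "Cs S1 S2 \<in> sets \<pi>" using C_meas calculation borel by simp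
      ultimately show ?thesis using e
        by (subst AE_iff_measurable[of "Cs S1 S2"]) (auto simp: sp borel)
    qed
    have "AE x in \<pi>. \<forall>S\<in>UNIV. (fst S \<noteq> {} \<and> snd S \<noteq> {} \<and> NT (fst S) (snd S)) \<longrightarrow> x \<notin> Cs (fst S) (snd S)"
      by (rule AE_finite_allI) (auto intro: null)
    then have "AE x in \<pi>. x \<in> pure_profiles"
      using AEp
    proof eventually_elim
      case (elim x)
      define S1 where "S1 = {i. 0 < fst x $ i}"
      define S2 where "S2 = {j. 0 < snd x $ j}"
      have xC: "x \<in> Cs S1 S2" using elim by (simp add: Cs_def S1_def S2_def)
      have m1: "\<forall>i. 0 \<le> fst x $ i" "(\<Sum>i\<in>UNIV. fst x $ i) = 1" and m2: "\<forall>j. 0 \<le> snd x $ j" "(\<Sum>j\<in>UNIV. snd x $ j) = 1"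
        using elim by (auto simp: profiles_def mixed_strategy_def)
      have ne1: "S1 \<noteq> {}"
      proof
        assume "S1 = {}"
        then have "\<forall>i. fst x $ i = 0" using m1 by (auto simp: S1_def) (meson antisym not_le)
        then show False using m1 by simp
      qed
      have ne2: "S2 \<noteq> {}"
      proof
        assume "S2 = {}"
        then have "\<forall>j. snd x $ j = 0" using m2 by (auto simp: S2_def) (meson antisym not_le)
        then show False using m2 by simp
      qed
      have "\<not> NT S1 S2" using elim xC ne1 ne2 by force
      then have u1: "\<And>i k. i \<in> S1 \<Longrightarrow> k \<in> S1 \<Longrightarrow> i = k" and u2: "\<And>j l. j \<in> S2 \<Longrightarrow> l \<in> S2 \<Longrightarrow> j = l"
        unfolding NT_def by blast+
      obtain a where a: "a \<in> S1" using ne1 by blast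
      obtain b where b: "b \<in> S2" using ne2 by blast
      have z1: "fst x $ i = 0" if "i \<noteq> a" for i
        using u1[OF a, of i] that m1 by (auto simp: S1_def) (meson antisym not_le)
      have z2: "snd x $ j = 0" if "j \<noteq> b" for j
        using u2[OF b, of j] that m2 by (auto simp: S2_def) (meson antisym not_le)
      have s1: "(\<Sum>i\<in>UNIV. fst x $ i) = fst x $ a"
        using z1 by (simp add: sum.remove[of UNIV a] sum.neutral)
      have s2: "(\<Sum>j\<in>UNIV. snd x $ j) = snd x $ b"
        using z2 by (simp add: sum.remove[of UNIV b] sum.neutral)
      have "fst x = axis a 1" using z1 s1 m1 by (auto simp: vec_eq_iff axis_def)
      moreover have "snd x = axis b 1" using z2 s2 m2 by (auto simp: vec_eq_iff axis_def)
      ultimately show ?case unfolding pure_profiles_def by (intro CollectI exI[of _ a] exI[of _ b]) (simp add: prod_eq_iff)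
    qed
    then show "emeasure \<pi> pure_profiles = 1"
      by (rule prob_space.emeasure_eq_1_AE[OF prob Qm])
  next
    assume pure1: "emeasure \<pi> pure_profiles = 1"
    have AEq: "AE x in \<pi>. x \<in> pure_profiles"
      using prob_space.AE_iff_emeasure_eq_1[OF prob, of "\<lambda>x. x \<in> pure_profiles"] Qm pure1 sp by simp
    show "smwu_stationary eta1 eta2 A \<pi>"
      unfolding smwu_stationary_def
    proof
      fix B :: "((real^'n) \<times> (real^'m)) set" assume B: "B \<in> sets borel"
      have "(\<integral>\<^sup>+x. ennreal (smwu_kernel eta1 eta2 A x B) \<partial>\<pi>) = (\<integral>\<^sup>+x. indicator B x \<partial>\<pi>)"
        using AEq by (intro nn_integral_cong_AE) (auto elim!: eventually_mono simp: kernel_pure ennreal_indicator)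
      also have "\<dots> = emeasure \<pi> B" using B borel by simp
      finally show "(\<integral>\<^sup>+x. ennreal (smwu_kernel eta1 eta2 A x B) \<partial>\<pi>) = emeasure \<pi> B" .
    qed
  qed
qed

end
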